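(* Let $k>1$, let $F=F(a_1,\dots,a_k)$ and $A_{2k}=\{a_1^{\pm1},\dots,a_k^{\pm1}\}$. Let $c\ge 1$ and let $Z$ be the set of all cyclically reduced words $x$ over $A_{2k}$ such that \[ C_{2k}(x)\ge -\frac{c}{2}+|x|\frac{\log_2(2k-1)}{2}. \] Then there exists $n_0>1$ such that for every $n\ge n_0$, \[ \frac{\gamma(n,Z)}{\gamma(n,CR)}\ge 1-\frac{1}{2^c}. \]
   Context: $CR$ denotes the set of all cyclically reduced words over $A_{2k}$ (viewed as elements of $F$), and for $S\subseteq F$, $\gamma(n,S)$ is the number of $x\in S$ with $|x|=n$. Kolmogorov complexity: fix a universal Turing machine computing a universal partial recursive function $\phi:\{0,1\}^\ast\to\{0,1\}^\ast$, and for $x\in\{0,1\}^\ast$ let $C(x)=\min\{|p|:\phi(p)=x\}$. Fix a recursive bijection $h:A_{2k}^\ast\to\{0,1\}^\ast$ and for $x\in A_{2k}^\ast$ let $C_{2k}(x)=C(h(x))$. *)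

theory Defs
  imports Complex_Main
begin

text \<open>Letters of A_2k: a pair (i, b) stands for a_(i+1) if b = True and its inverse
  if b = False; only i < k is allowed.\<close>
type_synonym letter = "nat \<times> bool"

definition alphabet :: "nat \<Rightarrow> letter set" where
  "alphabet k = {(i, b). i < k}"

definition inv_letter :: "letter \<Rightarrow> letter" where
  "inv_letter a = (fst a, \<not> snd a)"

definition reduced :: "letter list \<Rightarrow> bool" where
  "reduced w \<longleftrightarrow> (\<forall>i. Suc i < length w \<longrightarrow> w ! Suc i \<noteq> inv_letter (w ! i))"

definition cyclically_reduced :: "letter list \<Rightarrow> bool" where
  "cyclically_reduced w \<longleftrightarrow> reduced w \<and> (w \<noteq> [] \<longrightarrow> last w \<noteq> inv_letter (hd w))"

definition CR :: "nat \<Rightarrow> letter list set" where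
  "CR k = {w \<in> lists (alphabet k). cyclically_reduced w}"

definition gamma :: "nat \<Rightarrow> letter list set \<Rightarrow> nat" where
  "gamma n S = card {x \<in> S. length x = n}"

definition kolmogorov :: "(bool list \<Rightarrow> bool list option) \<Rightarrow> bool list \<Rightarrow> nat" where
  "kolmogorov phi x = (LEAST n. \<exists>p. length p = n \<and> phi p = Some x)"

definition kolmogorov_2k :: "(bool list \<Rightarrow> bool list option) \<Rightarrow> (letter list \<Rightarrow> bool list)
    \<Rightarrow> letter list \<Rightarrow> nat" where
  "kolmogorov_2k phi h x = kolmogorov phi (h x)"

end

theory Submission
  imports Defs
begin

lemma card_short_bool_lists:
  "finite {p::bool list. length p < L} \<and> card {p::bool list. length p < L} \<le> 2 ^ L"
proof (induction L)
  case 0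
  then show ?case by simp
next
  case (Suc L)
  have eq: "{p::bool list. length p < Suc L} = {p. length p < L} \<union> {p. set p \<subseteq> UNIV \<and> length p = L}"
    by auto
  have f2: "finite {p::bool list. set p \<subseteq> UNIV \<and> length p = L}"
    by (rule finite_lists_length_eq) simp
  have c2: "card {p::bool list. set p \<subseteq> UNIV \<and> length p = L} = 2 ^ L"
    by (subst card_lists_length_eq) (simp_all add: card_UNIV_bool)
  have u: "card {p::bool list. length p < Suc L}
      \<le> card {p::bool list. length p < L} + card {p::bool list. set p \<subseteq> UNIV \<and> length p = L}"
    unfolding eq by (rule card_Un_le)
  have ih: "card {p::bool list. length p < L} \<le> 2 ^ L" "finite {p::bool list. length p < L}"
    using Suc.IH by auto
  have "card {p::bool list. length p < Suc L} \<le> 2 ^ Suc L"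
    using u ih(1) c2 by simp
  moreover have "finite {p::bool list. length p < Suc L}"
    unfolding eq using ih(2) f2 by (rule finite_UnI)
  ultimately show ?case by blast
qed

lemma kolm_ex:
  assumes "\<forall>x. \<exists>p. phi p = Some x"
  shows "\<exists>p. length p = kolmogorov phi y \<and> phi p = Some y"
proof -
  obtain p where "phi p = Some y" using assms by blast
  then have "\<exists>n p. length p = n \<and> phi p = Some y" by blast
  then show ?thesis unfolding kolmogorov_def by (rule LeastI_ex)
qed

lemma finite_alphabet: "finite (alphabet k)"
proof -
  have "alphabet k = {..<k} \<times> UNIV" unfolding alphabet_def by auto
  then show ?thesis by simp
qed

lemma pos_cr:
  assumes "set w \<subseteq> (\<lambda>i. (i, True)) ` {..<k}"
  shows "w \<in> CR k"
proof -
  have s: "\<And>i. i < length w \<Longrightarrow> snd (w ! i)" using assms nth_mem by fastforce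
  have "reduced w" unfolding reduced_def inv_letter_def
    using s by (metis Suc_lessD snd_conv)
  moreover have "w \<noteq> [] \<longrightarrow> last w \<noteq> inv_letter (hd w)"
    using s unfolding inv_letter_def
    by (metis hd_conv_nth last_conv_nth length_greater_0_conv diff_less zero_less_one snd_conv)
  moreover have "w \<in> lists (alphabet k)" using assms unfolding alphabet_def by auto
  ultimately show ?thesis unfolding CR_def cyclically_reduced_def by auto
qed

theorem proposition3p3:
  fixes k :: nat and c :: real
    and phi :: "bool list \<Rightarrow> bool list option"
    and h :: "letter list \<Rightarrow> bool list"
    and Z :: "letter list set"
  assumes "k > 1"
    and "\<forall>x. \<exists>p. phi p = Some x"
    and "bij_betw h (lists (alphabet k)) UNIV"
    and "c \<ge> 1"
    and "Z = {x \<in> CR k. real (kolmogorov_2k phi h x)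
                 \<ge> - c / 2 + real (length x) * log 2 (2 * real k - 1) / 2}"
  shows "\<exists>n0 :: nat. n0 > 1 \<and> (\<forall>n \<ge> n0.
           real (gamma n Z) / real (gamma n (CR k)) \<ge> 1 - 1 / 2 powr c)"
proof -
  define l where "l = log 2 (2 * real k - 1)"
  define T where "T n = - c / 2 + real n * l / 2" for n :: nat
  define G where "G n = {x \<in> CR k. length x = n}" for n
  define Bad where "Bad n = {x \<in> G n. real (kolmogorov_2k phi h x) < T n}" for n
  have finG: "finite (G n)" for n
  proof -
    have "G n \<subseteq> {xs. set xs \<subseteq> alphabet k \<and> length xs = n}"
      unfolding G_def CR_def by auto
    then show ?thesis using finite_lists_length_eq[OF finite_alphabet] finite_subset by blast
  qed
  have lowG: "real k ^ n \<le> real (card (G n))" for n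
  proof -
    let ?P = "(\<lambda>i. (i, True)) ` {..<k}"
    have "card ?P = k" by (simp add: card_image inj_on_def)
    have "{xs. set xs \<subseteq> ?P \<and> length xs = n} \<subseteq> G n"
      unfolding G_def using pos_cr by blast
    then have "card {xs. set xs \<subseteq> ?P \<and> length xs = n} \<le> card (G n)"
      using finG card_mono by blast
    then have "k ^ n \<le> card (G n)" using card_lists_length_eq[of ?P n] \<open>card ?P = k\<close> by simp
    then show ?thesis by (metis of_nat_le_iff of_nat_power)
  qed
  have badb: "real (card (Bad n)) \<le> 2 powr (T n + 1)" if T0: "T n \<ge> 0" for n
  proof -
    define L where "L = nat \<lceil>T n\<rceil>"
    define p where "p x = (SOME p. length p = kolmogorov_2k phi h x \<and> phi p = Some (h x))" for x
    have pp: "length (p x) = kolmogorov_2k phi h x \<and> phi (p x) = Some (h x)" for x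
      unfolding p_def kolmogorov_2k_def
      by (rule someI_ex) (rule kolm_ex[OF assms(2)])
    have inj: "inj_on p (Bad n)"
    proof (rule inj_onI)
      fix x y assume xy: "x \<in> Bad n" "y \<in> Bad n" "p x = p y"
      then have "h x = h y" using pp by (metis option.inject)
      moreover have "x \<in> lists (alphabet k)" "y \<in> lists (alphabet k)"
        using xy unfolding Bad_def G_def CR_def by auto
      ultimately show "x = y" using assms(3) unfolding bij_betw_def inj_on_def by blast
    qed
    have sub: "p ` Bad n \<subseteq> {q::bool list. length q < L}"
    proof
      fix q assume "q \<in> p ` Bad n"
      then obtain x where x: "x \<in> Bad n" "q = p x" by blast
      then have "real (kolmogorov_2k phi h x) < T n" unfolding Bad_def by auto
      then have "int (kolmogorov_2k phi h x) < \<lceil>T n\<rceil>"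
        by (simp add: less_ceiling_iff)
      then have "kolmogorov_2k phi h x < L" unfolding L_def by linarith
      then show "q \<in> {q::bool list. length q < L}" using x pp by simp
    qed
    have "card (Bad n) = card (p ` Bad n)" using inj by (simp add: card_image)
    also have "\<dots> \<le> card {q::bool list. length q < L}"
      using sub card_mono card_short_bool_lists by blast
    also have "\<dots> \<le> 2 ^ L" using card_short_bool_lists by blast
    finally have "real (card (Bad n)) \<le> 2 ^ L" by (metis of_nat_le_iff of_nat_numeral of_nat_power)
    also have "(2::real) ^ L = 2 powr (real L)" by (simp add: powr_realpow)
    also have "\<dots> \<le> 2 powr (T n + 1)"
    proof -
      have c0: "\<lceil>T n\<rceil> \<ge> 0" using T0 by simp
      have "real L = real_of_int \<lceil>T n\<rceil>" unfolding L_def using c0 by simp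
      moreover have "real_of_int \<lceil>T n\<rceil> \<le> T n + 1" using ceiling_correct[of "T n"] by linarith
      ultimately have "real L \<le> T n + 1" by simp
      then show ?thesis by simp
    qed
    finally show ?thesis .
  qed
  have Zn: "{x \<in> Z. length x = n} = G n - Bad n" for n
    unfolding assms(5) G_def Bad_def T_def l_def by auto
  have gZ: "real (gamma n Z) = real (card (G n)) - real (card (Bad n))" for n
  proof -
    have "Bad n \<subseteq> G n" unfolding Bad_def by auto
    then show ?thesis unfolding gamma_def Zn using finG
      by (simp add: card_Diff_subset finite_subset card_mono of_nat_diff)
  qed

  have l0: "l > 0" unfolding l_def using assms(1) by simp
  obtain N1 :: nat where N1: "c / l \<le> real N1" by (meson real_arch_simple)
  have T0: "T n \<ge> 0" if "n \<ge> N1" for n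
  proof -
    have "c \<le> real N1 * l" using N1 l0 by (simp add: divide_le_eq)
    also have "\<dots> \<le> real n * l" using that l0 by simp
    finally show ?thesis unfolding T_def by simp
  qed
  define s where "s = sqrt (2 * real k - 1)"
  define q where "q = s / real k"
  have k1: "real k > 1" using assms(1) by simp
  have s0: "s > 0" unfolding s_def using k1 by simp
  have sk: "s < real k"
  proof -
    have "0 < (real k - 1)^2" using k1 by simp
    then have "2 * real k - 1 < (real k)^2" by (simp add: power2_eq_square algebra_simps)
    then have "s < sqrt ((real k)^2)" unfolding s_def by (simp only: real_sqrt_less_iff)
    then show ?thesis using k1 by simp
  qed
  have q0: "q \<ge> 0" "q < 1" unfolding q_def using s0 sk k1 by auto
  define e where "e = 2 powr (- c) / 2 powr (1 - c / 2)"
  have e0: "e > 0" unfolding e_def by simp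
  have "(\<lambda>n. q ^ n) \<longlonglongrightarrow> 0" using q0 by (intro LIMSEQ_power_zero) simp
  then have "eventually (\<lambda>n. q ^ n < e) sequentially" using e0 by (rule order_tendstoD)
  then obtain N2 where N2: "\<And>n. n \<ge> N2 \<Longrightarrow> q ^ n < e" unfolding eventually_sequentially by blast
  define n0 where "n0 = max 2 (max N1 N2)"
  have "\<forall>n \<ge> n0. real (gamma n Z) / real (gamma n (CR k)) \<ge> 1 - 1 / 2 powr c"
  proof (intro allI impI)
    fix n assume n: "n \<ge> n0"
    have key: "2 powr (T n + 1) = 2 powr (1 - c / 2) * s ^ n"
    proof -
      have "T n + 1 = (1 - c / 2) + l * (real n / 2)" unfolding T_def by simp
      then have "2 powr (T n + 1) = 2 powr ((1 - c / 2) + l * (real n / 2))" by (rule arg_cong)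
      also have "\<dots> = 2 powr (1 - c / 2) * 2 powr (l * (real n / 2))" by (rule powr_add)
      also have "2 powr (l * (real n / 2)) = (2 powr l) powr (real n / 2)" by (simp add: powr_powr)
      also have "2 powr l = 2 * real k - 1" unfolding l_def using k1 by simp
      also have "(2 * real k - 1) powr (real n / 2) = ((2 * real k - 1) powr (1/2)) powr real n"
        by (simp add: powr_powr)
      also have "(2 * real k - 1) powr (1/2) = s" unfolding s_def using k1 by (simp add: powr_half_sqrt)
      also have "s powr real n = s ^ n" using s0 by (simp add: powr_realpow)
      finally show ?thesis .
    qed
    have "real k ^ n > 0" using k1 by simp
    then have Gp: "real (card (G n)) > 0" using lowG[of n] by linarith
    have "real (card (Bad n)) \<le> 2 powr (1 - c / 2) * s ^ n"
      using badb[of n] T0[of n] n key unfolding n0_def by simp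
    also have "s ^ n = q ^ n * real k ^ n" unfolding q_def using k1 by (simp add: power_divide)
    also have "2 powr (1 - c / 2) * (q ^ n * real k ^ n) \<le> 2 powr (1 - c / 2) * (e * real k ^ n)"
      using N2[of n] n unfolding n0_def by (intro mult_left_mono mult_right_mono) auto
    also have "2 powr (1 - c / 2) * (e * real k ^ n) = 2 powr (- c) * real k ^ n"
      unfolding e_def by simp
    also have "\<dots> \<le> 2 powr (- c) * real (card (G n))" using lowG[of n] by simp
    finally have B: "real (card (Bad n)) \<le> 2 powr (- c) * real (card (G n))" .
    have "real (gamma n (CR k)) = real (card (G n))" unfolding gamma_def G_def by simp
    then have "real (gamma n Z) / real (gamma n (CR k)) = 1 - real (card (Bad n)) / real (card (G n))"
      using gZ[of n] Gp by (simp add: field_simps)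
    also have "\<dots> \<ge> 1 - 2 powr (- c)" using B Gp by (simp add: divide_le_eq)
    finally show "real (gamma n Z) / real (gamma n (CR k)) \<ge> 1 - 1 / 2 powr c"
      by (simp add: powr_minus_divide)
  qed
  moreover have "n0 > 1" unfolding n0_def by simp
  ultimately show ?thesis by blast
qed

end
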